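(* Let $d\ge k\ge1$, $A\in\mathbb{R}^{d\times k}$ with $A^TA=I_k$, $\beta\in(0,1)$, and $\theta^*=\sqrt{1-\beta}\,AA^T$. Let $m\in\{0,1\}^d$ be a mask and put $\lambda_{\max}:=\|AA^TD(m)\|$ (spectral norm). Let $x_0\in\mathbb{R}^d$ be any point in the column space of $A$ (the known image), and let $x_1\in\mathbb{R}^d$ be arbitrary (e.g. a draw from $\mathcal N(0,I_d)$). Define the resampling iterates $$x_0^{(0)}=\tfrac{1}{\sqrt{1-\beta}}\theta^*x_1=AA^Tx_1,\qquad x_0^{(r)}=\tfrac{1}{\sqrt{1-\beta}}\theta^*\big(D(m)\,x_0^{(r-1)}+D(\mathbf 1-m)\,x_0\big)\quad(r\ge1).$$ Then for every $r\ge 0$, $$\|x_0^{(r)}-x_0\|\le \lambda_{\max}^r\,\frac{\|\theta^*\|\,\|x_1-x_0\|}{\sqrt{1-\beta}}.$$ Consequently, if $0<\lambda_{\max}<1$ (in particular $AA^TD(m)\prec I_d$ in the sense $\lambda_{\max}<1$) and $\epsilon>0$, then $\|x_0^{(r)}-x_0\|\le\epsilon$ for all $$r\ \ge\ \frac{\log\!\Big(\frac{\|\theta^*\|\,\|x_1-x_0\|}{\epsilon\sqrt{1-\beta}}\Big)}{\log(1/\lambda_{\max})},$$ i.e. the number of resampling steps needed for an $\epsilon$-accurate inpainting is $\mathcal O\big(\log(\|\theta^*\|\|x_1-x_0\|/(\epsilon\sqrt{1-\beta}))/\log(1/\lambda_{\max})\big)$, independently of which valid mask $m$ is used. *)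

theory Defs
  imports "HOL-Analysis.Analysis"
begin

definition diag_mat :: "real^'n \<Rightarrow> real^'n^'n" where
  "diag_mat v = (\<chi> i j. if i = j then v $ i else 0)"

definition spec_norm :: "real^'n^'m \<Rightarrow> real" where
  "spec_norm M = onorm (\<lambda>x. M *v x)"

end

theory Submission
  imports Defs
begin


lemma sn_bound: "norm (M *v x) \<le> spec_norm M * norm x"
  unfolding spec_norm_def using onorm[OF matrix_vector_mul_bounded_linear] by blast

lemma sn_nonneg: "0 \<le> spec_norm M"
  unfolding spec_norm_def using onorm_pos_le[OF matrix_vector_mul_bounded_linear] by blast

lemma diag_mult: "diag_mat v *v x = (\<chi> i. v $ i * x $ i)"
  unfolding diag_mat_def by (simp add: vec_eq_iff matrix_vector_mult_def if_distrib if_distribR cong: if_cong)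

theorem theorem2:
  fixes A :: "real^'k^'d" and \<beta> :: real and m :: "real^'d"
    and x0 x1 :: "real^'d" and X :: "nat \<Rightarrow> real^'d"
  assumes "CARD('k) \<le> CARD('d)"
    and "transpose A ** A = mat 1"
    and "0 < \<beta>" and "\<beta> < 1"
    and "\<forall>i. m $ i \<in> {0, 1}"
    and "\<exists>y. x0 = A *v y"
    and "X 0 = (1 / sqrt (1 - \<beta>)) *\<^sub>R ((sqrt (1 - \<beta>) *\<^sub>R (A ** transpose A)) *v x1)"
    and "\<forall>r. X (Suc r) = (1 / sqrt (1 - \<beta>)) *\<^sub>R
           ((sqrt (1 - \<beta>) *\<^sub>R (A ** transpose A)) *v
             (diag_mat m *v X r + diag_mat (1 - m) *v x0))"
  shows "(\<forall>r. norm (X r - x0) \<le>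
            spec_norm (A ** transpose A ** diag_mat m) ^ r *
            spec_norm (sqrt (1 - \<beta>) *\<^sub>R (A ** transpose A)) * norm (x1 - x0) / sqrt (1 - \<beta>))
       \<and> (\<forall>\<epsilon>>0. 0 < spec_norm (A ** transpose A ** diag_mat m) \<and>
                  spec_norm (A ** transpose A ** diag_mat m) < 1 \<longrightarrow>
            (\<forall>r::nat. real r \<ge>
                 ln (spec_norm (sqrt (1 - \<beta>) *\<^sub>R (A ** transpose A)) * norm (x1 - x0)
                     / (\<epsilon> * sqrt (1 - \<beta>)))
                 / ln (1 / spec_norm (A ** transpose A ** diag_mat m))
               \<longrightarrow> norm (X r - x0) \<le> \<epsilon>))"
proof -
  define s where "s = sqrt (1 - \<beta>)"
  have s0: "s > 0" using assms(4) by (simp add: s_def)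
  define P where "P = A ** transpose A"
  define L where "L = spec_norm (P ** diag_mat m)"
  define C where "C = spec_norm (s *\<^sub>R P) * norm (x1 - x0) / s"
  have sc: "\<And>v. (1 / s) *\<^sub>R ((s *\<^sub>R P) *v v) = P *v v"
    using s0 by (simp flip: scaleR_matrix_vector_assoc)
  obtain y where y: "x0 = A *v y" using assms(6) by blast
  have Px0: "P *v x0 = x0" unfolding P_def y
    by (simp add: matrix_vector_mul_assoc matrix_mul_assoc assms(2) flip: matrix_mul_assoc)
  have X0: "X 0 = P *v x1" using assms(7) sc by (simp add: s_def P_def)
  have XS: "X (Suc r) - x0 = (P ** diag_mat m) *v (X r - x0)" for r
  proof -
    have e: "diag_mat m *v X r + diag_mat (1 - m) *v x0 - x0 = diag_mat m *v (X r - x0)"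
      by (simp add: diag_mult vec_eq_iff algebra_simps)
    have "X (Suc r) = P *v (diag_mat m *v X r + diag_mat (1 - m) *v x0)"
      using assms(8) sc by (simp add: s_def P_def)
    hence "X (Suc r) - x0 = P *v (diag_mat m *v X r + diag_mat (1 - m) *v x0 - x0)"
      using Px0 by (simp add: matrix_vector_mult_diff_distrib)
    thus ?thesis using e by (simp add: matrix_vector_mul_assoc)
  qed
  have L0: "0 \<le> L" unfolding L_def by (rule sn_nonneg)
  have base: "norm (P *v (x1 - x0)) \<le> C"
  proof -
    have "P *v (x1 - x0) = (1 / s) *\<^sub>R ((s *\<^sub>R P) *v (x1 - x0))" using sc by simp
    hence "norm (P *v (x1 - x0)) = norm ((s *\<^sub>R P) *v (x1 - x0)) / s" using s0 by simp
    also have "\<dots> \<le> C" unfolding C_def using s0 by (intro divide_right_mono sn_bound) simp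
    finally show ?thesis .
  qed
  have main: "norm (X r - x0) \<le> L ^ r * C" for r
  proof (induction r)
    case 0
    have "X 0 - x0 = P *v (x1 - x0)" using X0 Px0 by (simp add: matrix_vector_mult_diff_distrib)
    then show ?case using base by simp
  next
    case (Suc r)
    have "norm (X (Suc r) - x0) \<le> L * norm (X r - x0)" unfolding XS L_def by (rule sn_bound)
    also have "\<dots> \<le> L * (L ^ r * C)" using Suc L0 by (simp add: mult_left_mono)
    finally show ?case by simp
  qed
  have C0: "0 \<le> C" unfolding C_def using s0 sn_nonneg norm_ge_zero by (intro divide_nonneg_pos mult_nonneg_nonneg) auto
  have part2: "norm (X r - x0) \<le> \<epsilon>"
    if e: "\<epsilon> > 0" and l: "0 < L" "L < 1" and r: "real r \<ge> ln (C / \<epsilon>) / ln (1 / L)" for \<epsilon> r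
  proof (cases "C = 0")
    case True then show ?thesis using main[of r] e by simp
  next
    case False
    hence Cp: "C > 0" using C0 by simp
    have lp: "ln (1 / L) > 0" using l by simp
    have "ln (C / \<epsilon>) \<le> real r * ln (1 / L)" using r lp by (simp add: pos_divide_le_eq)
    also have "\<dots> = - ln (L ^ r)" using l by (simp add: ln_realpow ln_div)
    finally have "ln C - ln \<epsilon> + ln (L ^ r) \<le> 0" using Cp e by (simp add: ln_div)
    hence "ln (L ^ r * C) \<le> ln \<epsilon>" using Cp l by (simp add: ln_mult)
    hence "L ^ r * C \<le> \<epsilon>" using Cp l e by simp
    then show ?thesis using main[of r] by simp
  qed
  have eq: "ln (spec_norm (sqrt (1 - \<beta>) *\<^sub>R (A ** transpose A)) * norm (x1 - x0) / (\<epsilon> * sqrt (1 - \<beta>)))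
        = ln (C / \<epsilon>)" for \<epsilon>
    unfolding C_def s_def P_def by (simp add: field_simps)
  have Ldef: "spec_norm (A ** transpose A ** diag_mat m) = L" unfolding L_def P_def by simp
  have Cdef: "spec_norm (sqrt (1 - \<beta>) *\<^sub>R (A ** transpose A)) * norm (x1 - x0) = C * s"
    unfolding C_def P_def s_def using s0 s_def by simp
  have P1: "norm (X r - x0) \<le> spec_norm (A ** transpose A ** diag_mat m) ^ r *
            spec_norm (sqrt (1 - \<beta>) *\<^sub>R (A ** transpose A)) * norm (x1 - x0) / sqrt (1 - \<beta>)" for r
  proof -
    have "spec_norm (A ** transpose A ** diag_mat m) ^ r *
            spec_norm (sqrt (1 - \<beta>) *\<^sub>R (A ** transpose A)) * norm (x1 - x0) / sqrt (1 - \<beta>)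
          = L ^ r * (spec_norm (sqrt (1 - \<beta>) *\<^sub>R (A ** transpose A)) * norm (x1 - x0)) / s"
      unfolding Ldef s_def by (simp add: mult.assoc)
    also have "\<dots> = L ^ r * (C * s) / s" unfolding Cdef ..
    also have "\<dots> = L ^ r * C" using s0 by simp
    finally show ?thesis using main[of r] by simp
  qed
  show ?thesis
  proof (intro conjI allI impI P1)
    fix \<epsilon> :: real and r :: nat
    assume a: "0 < \<epsilon>" "0 < spec_norm (A ** transpose A ** diag_mat m) \<and> spec_norm (A ** transpose A ** diag_mat m) < 1"
      "ln (spec_norm (sqrt (1 - \<beta>) *\<^sub>R (A ** transpose A)) * norm (x1 - x0) / (\<epsilon> * sqrt (1 - \<beta>))) /
                 ln (1 / spec_norm (A ** transpose A ** diag_mat m)) \<le> real r"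
    have "ln (C * s / (\<epsilon> * s)) / ln (1 / L) \<le> real r" using a(3) unfolding Ldef Cdef s_def .
    then show "norm (X r - x0) \<le> \<epsilon>" using part2[of \<epsilon> r] a s0 Ldef by simp
  qed
qed

end
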